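(* Let $p>1$, $s\ge r\ge2$, let $Q$ be an $s$-vertex $r$-graph and let $\mathcal P$ be a hereditary property of $r$-graphs with $\lambda^{(p)}(Q,\mathcal P)>0$. For each $n\ge s$ let $H_n\in\mathcal P_n$ satisfy $\lambda^{(p)}(Q,H_n)=\lambda^{(p)}(Q,\mathcal P_n)$ and let $\mathbf x^{(n)}$ be a principal $Q$-eigenvector of $H_n$ (for $p$). Then there exist infinitely many $n$ such that $$\big(\mathbf x^{(n)}_{\min}\big)^{p}\ge\frac1n\Big(1-\frac{p}{(p-1)s\log n}\Big).$$
   Context: An $r$-graph ($r\ge 2$) is a finite hypergraph all of whose edges have exactly $r$ vertices. For $I\subseteq V(H)$, $H[I]$ denotes the induced subhypergraph on $I$. For an $s$-vertex $r$-graph $Q$ and an $r$-graph $H$, $\mathcal N(Q,H)$ is the number of (not necessarily induced) subgraphs of $H$ isomorphic to $Q$. For an $n$-vertex $r$-graph $H$ with vertex set $[n]$ and $\mathbf x\in\mathbb R^n$, $P_{Q,H}(\mathbf x)=s!\sum_{\{i_1,\dots,i_s\}\in\binom{[n]}{s}}\mathcal N(Q,H[\{i_1,\dots,i_s\}])\,x_{i_1}\cdots x_{i_s}$, and for $p\ge1$, $\lambda^{(p)}(Q,H)=\max_{\|\mathbf x\|_p=1}P_{Q,H}(\mathbf x)$. A principal $Q$-eigenvector of $H$ is a nonnegative vector $\mathbf x$ with $\|\mathbf x\|_p=1$ and $P_{Q,H}(\mathbf x)=\lambda^{(p)}(Q,H)$; $\mathbf x_{\min}$ denotes its smallest entry.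 A hereditary property $\mathcal P$ of $r$-graphs is a family of $r$-graphs closed under isomorphism and under taking induced subgraphs; as a standing assumption, whenever $H\in\mathcal P$, the disjoint union of $H$ with an isolated vertex is also in $\mathcal P$. $\mathcal P_n$ is the set of members of $\mathcal P$ with $n$ vertices; $\lambda^{(p)}(Q,\mathcal P_n)=\max\{\lambda^{(p)}(Q,H):H\in\mathcal P_n\}$ and $\lambda^{(p)}(Q,\mathcal P)=\lim_{n\to\infty}\lambda^{(p)}(Q,\mathcal P_n)n^{s/p-s}$ (this limit exists). $\log$ is the natural logarithm. *)

theory Defs
  imports "HOL-Analysis.Analysis"
begin

type_synonym hgraph = "nat set \<times> nat set set"

definition verts :: "hgraph \<Rightarrow> nat set" where "verts H = fst H"
definition edges :: "hgraph \<Rightarrow> nat set set" where "edges H = snd H"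

definition rgraph :: "nat \<Rightarrow> hgraph \<Rightarrow> bool" where
  "rgraph r H \<longleftrightarrow> finite (verts H) \<and> (\<forall>e\<in>edges H. e \<subseteq> verts H \<and> card e = r)"

definition hiso :: "hgraph \<Rightarrow> hgraph \<Rightarrow> bool" where
  "hiso H H' \<longleftrightarrow> (\<exists>f. bij_betw f (verts H) (verts H') \<and> edges H' = (\<lambda>e. f ` e) ` edges H)"

definition induced :: "hgraph \<Rightarrow> nat set \<Rightarrow> hgraph" where
  "induced H I = (I, {e \<in> edges H. e \<subseteq> I})"

definition hereditary :: "nat \<Rightarrow> hgraph set \<Rightarrow> bool" where
  "hereditary r \<P> \<longleftrightarrow>
     (\<forall>H\<in>\<P>. rgraph r H)
   \<and> (\<forall>H\<in>\<P>. \<forall>H'. hiso H H' \<longrightarrow> H' \<in> \<P>)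
   \<and> (\<forall>H\<in>\<P>. \<forall>I. I \<subseteq> verts H \<longrightarrow> induced H I \<in> \<P>)
   \<and> (\<forall>H\<in>\<P>. \<forall>v. v \<notin> verts H \<longrightarrow> (insert v (verts H), edges H) \<in> \<P>)"

definition Ncopies :: "hgraph \<Rightarrow> hgraph \<Rightarrow> nat" where
  "Ncopies Q H = card {(W, F). W \<subseteq> verts H \<and> F \<subseteq> edges H \<and> (\<forall>e\<in>F. e \<subseteq> W) \<and> hiso (W, F) Q}"

definition PQ :: "hgraph \<Rightarrow> hgraph \<Rightarrow> (nat \<Rightarrow> real) \<Rightarrow> real" where
  "PQ Q H x = fact (card (verts Q)) *
     (\<Sum>I\<in>{I. I \<subseteq> verts H \<and> card I = card (verts Q)}.
        real (Ncopies Q (induced H I)) * (\<Prod>i\<in>I. x i))"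

definition pnorm_one :: "real \<Rightarrow> nat set \<Rightarrow> (nat \<Rightarrow> real) \<Rightarrow> bool" where
  "pnorm_one p V x \<longleftrightarrow> (\<Sum>i\<in>V. \<bar>x i\<bar> powr p) = 1"

definition lam :: "real \<Rightarrow> hgraph \<Rightarrow> hgraph \<Rightarrow> real" where
  "lam p Q H = Sup {PQ Q H x | x. pnorm_one p (verts H) x}"

definition principal_eigvec :: "real \<Rightarrow> hgraph \<Rightarrow> hgraph \<Rightarrow> (nat \<Rightarrow> real) \<Rightarrow> bool" where
  "principal_eigvec p Q H x \<longleftrightarrow> (\<forall>i\<in>verts H. x i \<ge> 0) \<and> pnorm_one p (verts H) x
     \<and> PQ Q H x = lam p Q H"

definition xmin :: "nat set \<Rightarrow> (nat \<Rightarrow> real) \<Rightarrow> real" where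
  "xmin V x = Min (x ` V)"

definition lamPn :: "real \<Rightarrow> hgraph \<Rightarrow> hgraph set \<Rightarrow> nat \<Rightarrow> real" where
  "lamPn p Q \<P> n = Sup {lam p Q H | H. H \<in> \<P> \<and> card (verts H) = n}"

definition lamP :: "real \<Rightarrow> hgraph \<Rightarrow> hgraph set \<Rightarrow> real" where
  "lamP p Q \<P> = lim (\<lambda>n. lamPn p Q \<P> n * real n powr (real (card (verts Q)) / p - real (card (verts Q))))"

end

theory Submission
  imports Defs "HOL-Real_Asymp.Real_Asymp"
begin



lemma verts_pair[simp]: "verts (a, b) = a" by (simp add: verts_def)
lemma edges_pair[simp]: "edges (a, b) = b" by (simp add: edges_def)
lemma verts_induced[simp]: "verts (induced H I) = I" by (simp add: induced_def verts_def)
lemma edges_induced[simp]: "edges (induced H I) = {e \<in> edges H. e \<subseteq> I}"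
  by (simp add: induced_def edges_def)
lemma induced_induced: "I \<subseteq> J \<Longrightarrow> induced (induced H J) I = induced H I"
  by (auto simp: induced_def edges_def)

lemma fin_idx: "finite V \<Longrightarrow> finite {I. I \<subseteq> V \<and> P I}"
  by (rule finite_subset[of _ "Pow V"]) auto

definition Dv :: "hgraph \<Rightarrow> hgraph \<Rightarrow> nat \<Rightarrow> (nat \<Rightarrow> real) \<Rightarrow> real" where
  "Dv Q H v x = fact (card (verts Q)) * (\<Sum>I\<in>{I. I \<subseteq> verts H \<and> card I = card (verts Q) \<and> v \<in> I}.
        real (Ncopies Q (induced H I)) * (\<Prod>i\<in>I. x i))"
definition Bv :: "hgraph \<Rightarrow> hgraph \<Rightarrow> nat \<Rightarrow> (nat \<Rightarrow> real) \<Rightarrow> real" where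
  "Bv Q H v x = fact (card (verts Q)) * (\<Sum>I\<in>{I. I \<subseteq> verts H \<and> card I = card (verts Q) \<and> v \<in> I}.
        real (Ncopies Q (induced H I)) * (\<Prod>i\<in>I-{v}. x i))"

lemma PQ_split:
  assumes "finite (verts H)" "v \<in> verts H"
  shows "PQ Q H x = PQ Q (induced H (verts H - {v})) x + Dv Q H v x"
proof -
  let ?k = "card (verts Q)"
  let ?f = "\<lambda>I. real (Ncopies Q (induced H I)) * (\<Prod>i\<in>I. x i)"
  have eq: "{I. I \<subseteq> verts H \<and> card I = ?k} = {I. I \<subseteq> verts H - {v} \<and> card I = ?k} \<union> {I. I \<subseteq> verts H \<and> card I = ?k \<and> v \<in> I}" by auto
  have "sum ?f {I. I \<subseteq> verts H \<and> card I = ?k} = sum ?f {I. I \<subseteq> verts H - {v} \<and> card I = ?k} + sum ?f {I. I \<subseteq> verts H \<and> card I = ?k \<and> v \<in> I}"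
    unfolding eq by (rule sum.union_disjoint) (use assms(1) fin_idx in auto)
  moreover have "sum ?f {I. I \<subseteq> verts H - {v} \<and> card I = ?k} = (\<Sum>I\<in>{I. I \<subseteq> verts (induced H (verts H - {v})) \<and> card I = ?k}. real (Ncopies Q (induced (induced H (verts H - {v})) I)) * (\<Prod>i\<in>I. x i))"
    by (intro sum.cong) (auto simp: induced_induced)
  ultimately show ?thesis unfolding PQ_def Dv_def by (simp add: algebra_simps)
qed

lemma Dv_upd:
  assumes "finite (verts H)"
  shows "Dv Q H v (x(v:=w)) = w * Bv Q H v x"
proof -
  have "(\<Prod>i\<in>I. (x(v:=w)) i) = w * (\<Prod>i\<in>I-{v}. x i)" if "I \<subseteq> verts H" "v \<in> I" for I
  proof -
    have fI: "finite I" using that assms finite_subset by blast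
    have "(\<Prod>i\<in>I. (x(v:=w)) i) = (x(v:=w)) v * (\<Prod>i\<in>I-{v}. (x(v:=w)) i)"
      by (rule prod.remove[OF fI that(2)])
    also have "(\<Prod>i\<in>I-{v}. (x(v:=w)) i) = (\<Prod>i\<in>I-{v}. x i)" by (rule prod.cong) auto
    finally show ?thesis by simp
  qed
  then have "(\<Sum>I\<in>{I. I \<subseteq> verts H \<and> card I = card (verts Q) \<and> v \<in> I}. real (Ncopies Q (induced H I)) * (\<Prod>i\<in>I. (x(v:=w)) i))
     = (\<Sum>I\<in>{I. I \<subseteq> verts H \<and> card I = card (verts Q) \<and> v \<in> I}. w * (real (Ncopies Q (induced H I)) * (\<Prod>i\<in>I-{v}. x i)))"
    by (intro sum.cong) auto
  then show ?thesis unfolding Dv_def Bv_def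
    by (simp add: sum_distrib_left[symmetric])
qed

lemma Dv_eq: "finite (verts H) \<Longrightarrow> Dv Q H v x = x v * Bv Q H v x"
  using Dv_upd[of H Q v x "x v"] by simp

lemma PQ_induced_upd:
  "PQ Q (induced H (verts H - {v})) (x(v:=w)) = PQ Q (induced H (verts H - {v})) x"
  unfolding PQ_def
  by (intro arg_cong2[where f="(*)"] refl sum.cong arg_cong2[where f="(*)"] prod.cong) auto

lemma PQ_scale: "PQ Q H (\<lambda>i. c * x i) = c ^ card (verts Q) * PQ Q H x"
proof -
  have "(\<Prod>i\<in>I. c * x i) = c ^ card (verts Q) * (\<Prod>i\<in>I. x i)" if "card I = card (verts Q)" for I
    using that by (simp add: prod.distrib)
  then have "(\<Sum>I\<in>{I. I \<subseteq> verts H \<and> card I = card (verts Q)}. real (Ncopies Q (induced H I)) * (\<Prod>i\<in>I. c * x i))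
     = (\<Sum>I\<in>{I. I \<subseteq> verts H \<and> card I = card (verts Q)}. c ^ card (verts Q) * (real (Ncopies Q (induced H I)) * (\<Prod>i\<in>I. x i)))"
    by (intro sum.cong) auto
  then show ?thesis unfolding PQ_def
    by (simp add: sum_distrib_left[symmetric])
qed

lemma PQ_nonneg:
  assumes "\<forall>i\<in>verts H. x i \<ge> 0"
  shows "PQ Q H x \<ge> 0"
  unfolding PQ_def using assms
  by (intro mult_nonneg_nonneg sum_nonneg prod_nonneg) auto

lemma Dv_nonneg:
  assumes "\<forall>i\<in>verts H. x i \<ge> 0"
  shows "Dv Q H v x \<ge> 0"
  unfolding Dv_def using assms
  by (intro mult_nonneg_nonneg sum_nonneg prod_nonneg) auto




lemma abs_le1:
  assumes "p > 0" "finite V" "pnorm_one p V y" "i \<in> V"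
  shows "\<bar>y i\<bar> \<le> 1"
proof (rule ccontr)
  assume "\<not> ?thesis" then have "1 < \<bar>y i\<bar>" by simp
  then have "1 < \<bar>y i\<bar> powr p" using assms(1) by simp
  moreover have "\<bar>y i\<bar> powr p \<le> (\<Sum>j\<in>V. \<bar>y j\<bar> powr p)"
    by (rule member_le_sum) (use assms in auto)
  ultimately show False using assms(3) unfolding pnorm_one_def by simp
qed

lemma Ncopies_le: "finite I \<Longrightarrow> Ncopies Q (induced H I) \<le> 2 ^ card I * 2 ^ (2 ^ card I)"
proof -
  assume fI: "finite I"
  have "{(W,F). W \<subseteq> verts (induced H I) \<and> F \<subseteq> edges (induced H I) \<and> (\<forall>e\<in>F. e \<subseteq> W) \<and> hiso (W,F) Q}
        \<subseteq> Pow I \<times> Pow (Pow I)" by auto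
  then have "Ncopies Q (induced H I) \<le> card (Pow I \<times> Pow (Pow I))" unfolding Ncopies_def
    by (intro card_mono) (use fI in auto)
  also have "\<dots> = 2 ^ card I * 2 ^ (2 ^ card I)" using fI by (simp add: card_cartesian_product card_Pow)
  finally show ?thesis .
qed

definition Kb :: "nat \<Rightarrow> nat \<Rightarrow> real" where
  "Kb k n = fact k * (2 ^ n * (2 ^ k * 2 ^ (2 ^ k)))"

lemma PQ_bound:
  assumes "p > 0" "finite (verts H)" "pnorm_one p (verts H) y"
  shows "PQ Q H y \<le> Kb (card (verts Q)) (card (verts H))"
proof -
  let ?k = "card (verts Q)"
  let ?K = "(2::real) ^ ?k * 2 ^ (2 ^ ?k)"
  let ?J = "{I. I \<subseteq> verts H \<and> card I = ?k}"
  have trm: "real (Ncopies Q (induced H I)) * (\<Prod>i\<in>I. y i) \<le> ?K" if "I \<in> ?J" for I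
  proof -
    have fI: "finite I" using that assms(2) finite_subset by auto
    have "\<bar>\<Prod>i\<in>I. y i\<bar> \<le> 1" unfolding abs_prod
      by (rule prod_le_1) (use that abs_le1[OF assms(1,2,3)] in auto)
    have N: "real (Ncopies Q (induced H I)) \<le> ?K"
    proof -
      have "real (Ncopies Q (induced H I)) \<le> real (2 ^ card I * 2 ^ (2 ^ card I))"
        using Ncopies_le[OF fI] by (intro of_nat_mono)
      then show ?thesis using that by simp
    qed
    have "real (Ncopies Q (induced H I)) * (\<Prod>i\<in>I. y i) \<le> real (Ncopies Q (induced H I)) * \<bar>\<Prod>i\<in>I. y i\<bar>"
      by (intro mult_left_mono) auto
    also have "\<dots> \<le> real (Ncopies Q (induced H I)) * 1"
      using \<open>\<bar>\<Prod>i\<in>I. y i\<bar> \<le> 1\<close> by (intro mult_left_mono) auto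
    finally show ?thesis using N by simp
  qed
  have "(\<Sum>I\<in>?J. real (Ncopies Q (induced H I)) * (\<Prod>i\<in>I. y i)) \<le> of_nat (card ?J) * ?K"
    by (rule sum_bounded_above) (use trm in auto)
  also have "\<dots> \<le> 2 ^ card (verts H) * ?K"
  proof -
    have "card ?J \<le> card (Pow (verts H))" by (rule card_mono) (use assms(2) in auto)
    then have "real (card ?J) \<le> 2 ^ card (verts H)" using assms(2)
      by (simp add: card_Pow flip: of_nat_le_iff)
    then show ?thesis by (intro mult_right_mono) auto
  qed
  finally show ?thesis unfolding PQ_def Kb_def
    by (intro mult_left_mono) auto
qed

lemma lam_ge:
  assumes "p > 0" "finite (verts H)" "pnorm_one p (verts H) y"
  shows "PQ Q H y \<le> lam p Q H"
  unfolding lam_def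
proof (rule cSup_upper)
  show "PQ Q H y \<in> {PQ Q H x |x. pnorm_one p (verts H) x}" using assms(3) by auto
  show "bdd_above {PQ Q H x |x. pnorm_one p (verts H) x}"
    by (rule bdd_aboveI[where M="Kb (card (verts Q)) (card (verts H))"]) (use PQ_bound[OF assms(1,2)] in blast)
qed

lemma pnorm_exists:
  assumes "v \<in> V" "finite V"
  shows "pnorm_one p V (\<lambda>i. if i = v then 1 else 0)"
proof -
  have "(\<Sum>i\<in>V. \<bar>if i = v then 1 else 0 :: real\<bar> powr p) = (\<Sum>i\<in>V. if i = v then 1 else 0)"
    by (intro sum.cong) auto
  also have "\<dots> = 1" using assms by simp
  finally show ?thesis unfolding pnorm_one_def .
qed

lemma lam_le_bound:
  assumes "p > 0" "finite (verts H)" "verts H \<noteq> {}"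
  shows "lam p Q H \<le> Kb (card (verts Q)) (card (verts H))"
  unfolding lam_def
proof (rule cSup_least)
  obtain v where "v \<in> verts H" using assms(3) by auto
  then show "{PQ Q H x |x. pnorm_one p (verts H) x} \<noteq> {}"
    using pnorm_exists[of v "verts H" p] assms(2) by auto
  show "\<And>z. z \<in> {PQ Q H x |x. pnorm_one p (verts H) x} \<Longrightarrow> z \<le> Kb (card (verts Q)) (card (verts H))"
    using PQ_bound[OF assms(1,2)] by blast
qed




lemma lagrange:
  assumes p: "p > 1" and fin: "finite (verts H)" and v: "v \<in> verts H"
    and pe: "principal_eigvec p Q H x"
  shows "Dv Q H v x \<le> real (card (verts Q)) * lam p Q H * x v powr p"
proof -
  let ?k = "card (verts Q)"
  let ?V = "verts H"
  let ?H' = "induced H (verts H - {v})"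
  have nn: "\<forall>i\<in>?V. x i \<ge> 0" and pn: "pnorm_one p ?V x" and eq: "PQ Q H x = lam p Q H"
    using pe unfolding principal_eigvec_def by auto
  define A where "A = PQ Q ?H' x"
  define B where "B = Bv Q H v x"
  define L where "L = lam p Q H"
  have lamAB: "L = A + x v * B"
    using PQ_split[OF fin v, of Q x] Dv_eq[OF fin, of Q v x] eq unfolding A_def B_def L_def by simp
  have upd: "PQ Q H (x(v:=w)) = A + w * B" for w
    using PQ_split[OF fin v, of Q "x(v:=w)"] PQ_induced_upd[of Q H v x w] Dv_upd[OF fin, of Q v x w]
    unfolding A_def B_def by simp
  show ?thesis
  proof (cases "x v = 0")
    case True
    then show ?thesis using Dv_eq[OF fin, of Q v x] p by simp
  next
    case False
    then have xv: "x v > 0" using nn v by force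
    define c0 where "c0 = (\<Sum>i\<in>?V-{v}. \<bar>x i\<bar> powr p)"
    have c0nn: "c0 \<ge> 0" unfolding c0_def by (intro sum_nonneg) auto
    have c0eq: "c0 + x v powr p = 1"
      using pn sum.remove[OF fin v, of "\<lambda>i. \<bar>x i\<bar> powr p"] xv
      unfolding pnorm_one_def c0_def by simp
    define N where "N w = c0 + w powr p" for w
    have ineq: "A + w * B \<le> L * N w powr (?k / p)" if w: "w > x v" for w
    proof -
      have wpos: "w > 0" using w xv by simp
      have "w powr p > 0" using wpos by simp
      then have Npos: "N w > 0" unfolding N_def using c0nn by linarith
      define z where "z = x(v:=w)"
      have sumz: "(\<Sum>i\<in>?V. \<bar>z i\<bar> powr p) = N w"
      proof -
        have "(\<Sum>i\<in>?V. \<bar>z i\<bar> powr p) = \<bar>z v\<bar> powr p + (\<Sum>i\<in>?V-{v}. \<bar>z i\<bar> powr p)"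
          by (rule sum.remove[OF fin v])
        also have "(\<Sum>i\<in>?V-{v}. \<bar>z i\<bar> powr p) = c0" unfolding c0_def z_def
          by (intro sum.cong) auto
        finally show ?thesis unfolding N_def z_def using wpos by simp
      qed
      define c where "c = N w powr (-1/p)"
      have cpos: "c > 0" unfolding c_def using Npos by simp
      have "c powr p = N w powr (-1/p * p)" unfolding c_def by (rule powr_powr)
      also have "-1/p*p = -1" using p by simp
      also have "N w powr -1 = 1 / N w" using Npos by (simp add: powr_minus_divide)
      finally have cp: "c powr p = 1 / N w" .
      have pny: "pnorm_one p ?V (\<lambda>i. c * z i)"
      proof -
        have "(\<Sum>i\<in>?V. \<bar>c * z i\<bar> powr p) = (\<Sum>i\<in>?V. c powr p * \<bar>z i\<bar> powr p)"
          using cpos by (intro sum.cong) (auto simp: abs_mult powr_mult)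
        also have "\<dots> = c powr p * N w" by (simp add: sum_distrib_left[symmetric] sumz)
        finally show ?thesis unfolding pnorm_one_def using cp Npos by simp
      qed
      have "PQ Q H (\<lambda>i. c * z i) \<le> L" unfolding L_def
        by (rule lam_ge[OF _ fin pny]) (use p in simp)
      then have le1: "c ^ ?k * (A + w * B) \<le> L" using PQ_scale[of Q H c z] upd[of w] unfolding z_def by simp
      have ck: "c ^ ?k = N w powr (- (?k / p))"
        using cpos Npos unfolding c_def by (simp add: powr_realpow[symmetric] powr_powr)
      have "N w powr (?k / p) * c ^ ?k = 1" unfolding ck using Npos
        by (simp add: powr_add[symmetric])
      then have "A + w * B = N w powr (?k / p) * (c ^ ?k * (A + w * B))" by (simp add: algebra_simps)
      also have "\<dots> \<le> N w powr (?k / p) * L" using le1 by (intro mult_left_mono) auto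
      finally show ?thesis by (simp add: algebra_simps)
    qed
    define h where "h w = L * N w powr (?k / p) - A - w * B" for w
    have Nxv: "N (x v) = 1" unfolding N_def using c0eq by simp
    have h0: "h (x v) = 0" unfolding h_def Nxv using lamAB by simp
    have dN: "DERIV N (x v) :> p * x v powr (p - 1)" unfolding N_def
      using has_real_derivative_powr[OF xv, of p] xv by (auto intro!: derivative_eq_intros)
    have dh: "DERIV h (x v) :> L * ((?k / p) * N (x v) powr (?k / p - 1) * (p * x v powr (p - 1))) - B"
      unfolding h_def
      by (rule derivative_eq_intros DERIV_fun_powr[OF dN] | simp add: Nxv)+
    have dh': "DERIV h (x v) :> L * ?k * x v powr (p - 1) - B"
      using dh Nxv p by (simp add: mult.assoc)
    have Ble: "B \<le> L * ?k * x v powr (p - 1)"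
    proof (rule ccontr)
      assume "\<not> ?thesis"
      then have "L * ?k * x v powr (p - 1) - B < 0" by simp
      from DERIV_neg_dec_right[OF dh' this] obtain d where d: "d > 0"
        "\<forall>hh>0. hh < d \<longrightarrow> h (x v) > h (x v + hh)" by blast
      then have "h (x v + d/2) < 0" using h0 by auto
      moreover have "h (x v + d/2) \<ge> 0" using ineq[of "x v + d/2"] d(1) unfolding h_def by simp
      ultimately show False by simp
    qed
    have "Dv Q H v x = x v * B" using Dv_eq[OF fin] unfolding B_def by simp
    also have "\<dots> \<le> x v * (L * ?k * x v powr (p - 1))" using Ble xv by (intro mult_left_mono) auto
    also have "\<dots> = L * ?k * (x v powr 1 * x v powr (p - 1))" using xv by simp
    also have "x v powr 1 * x v powr (p - 1) = x v powr p" by (simp only: powr_add[symmetric]) simp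
    finally show ?thesis unfolding L_def by (simp add: algebra_simps)
  qed
qed




lemma lamPn_ge:
  assumes "p > 0" "H \<in> P" "card (verts H) = m" "m \<ge> 1"
  shows "lam p Q H \<le> lamPn p Q P m"
  unfolding lamPn_def
proof (rule cSup_upper)
  show "lam p Q H \<in> {lam p Q H |H. H \<in> P \<and> card (verts H) = m}" using assms(2,3) by blast
  show "bdd_above {lam p Q H |H. H \<in> P \<and> card (verts H) = m}"
  proof (rule bdd_aboveI[where M="Kb (card (verts Q)) m"])
    fix z assume "z \<in> {lam p Q H |H. H \<in> P \<and> card (verts H) = m}"
    then obtain H' where "z = lam p Q H'" "card (verts H') = m" by auto
    moreover then have "finite (verts H')" "verts H' \<noteq> {}" using assms(4) card_ge_0_finite by force+
    ultimately show "z \<le> Kb (card (verts Q)) m" using lam_le_bound[OF assms(1), of H' Q] by simp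
  qed
qed

lemma removal:
  assumes p: "p > 1" and her: "hereditary r P" and HP: "H \<in> P" and cn: "card (verts H) = n"
    and n2: "n \<ge> 2" and pe: "principal_eigvec p Q H x" and v: "v \<in> verts H"
    and vmin: "\<forall>i\<in>verts H. x v \<le> x i"
  shows "x v powr p \<le> 1 / real n"
    and "lam p Q H * (1 - real (card (verts Q)) * x v powr p) * (1 - x v powr p) powr (-(real (card (verts Q)) / p))
          \<le> lamPn p Q P (n - 1)"
proof -
  let ?k = "card (verts Q)"
  let ?V = "verts H"
  let ?H' = "induced H (verts H - {v})"
  define t where "t = x v powr p"
  have fin: "finite ?V" using her HP unfolding hereditary_def rgraph_def by auto
  have nn: "\<forall>i\<in>?V. x i \<ge> 0" and pn: "pnorm_one p ?V x" and eq: "PQ Q H x = lam p Q H"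
    using pe unfolding principal_eigvec_def by auto
  have "real (card ?V) * t \<le> (\<Sum>i\<in>?V. \<bar>x i\<bar> powr p)"
  proof (rule sum_bounded_below)
    fix i assume "i \<in> ?V"
    then show "t \<le> \<bar>x i\<bar> powr p" unfolding t_def using vmin nn v p
      by (intro powr_mono2) auto
  qed
  then have tn: "real n * t \<le> 1" using pn cn unfolding pnorm_one_def by simp
  then show t1: "x v powr p \<le> 1 / real n" unfolding t_def using n2 by (simp add: field_simps)
  have t0: "t \<ge> 0" unfolding t_def by simp
  have tlt: "t < 1"
  proof -
    have "real n \<ge> 2" using n2 by simp
    then have "2 * t \<le> real n * t" using t0 by (rule mult_right_mono)
    then have "2 * t \<le> 1" using tn by linarith
    then show ?thesis by simp
  qed
  have c0eq: "(\<Sum>i\<in>?V-{v}. \<bar>x i\<bar> powr p) = 1 - t"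
    using pn sum.remove[OF fin v, of "\<lambda>i. \<bar>x i\<bar> powr p"] nn v
    unfolding pnorm_one_def t_def by simp
  have H'P: "?H' \<in> P" using her HP unfolding hereditary_def by auto
  have cH': "card (verts ?H') = n - 1" using cn fin v by simp
  define c where "c = (1 - t) powr (-1/p)"
  have cpos: "c > 0" unfolding c_def using tlt by simp
  have "c powr p = (1 - t) powr (-1/p * p)" unfolding c_def by (rule powr_powr)
  also have "-1/p*p = -1" using p by simp
  also have "(1 - t) powr -1 = 1 / (1 - t)" using tlt by (simp add: powr_minus_divide)
  finally have cp: "c powr p = 1 / (1 - t)" .
  have pny: "pnorm_one p (verts ?H') (\<lambda>i. c * x i)"
  proof -
    have "(\<Sum>i\<in>?V-{v}. \<bar>c * x i\<bar> powr p) = (\<Sum>i\<in>?V-{v}. c powr p * \<bar>x i\<bar> powr p)"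
      using cpos by (intro sum.cong) (auto simp: abs_mult powr_mult)
    also have "\<dots> = c powr p * (1 - t)" by (simp add: sum_distrib_left[symmetric] c0eq)
    finally show ?thesis unfolding pnorm_one_def using cp tlt by simp
  qed
  have ck: "c ^ ?k = (1 - t) powr (- (?k / p))"
    using cpos tlt unfolding c_def by (simp add: powr_realpow[symmetric] powr_powr)
  have lag: "Dv Q H v x \<le> ?k * lam p Q H * t"
    using lagrange[OF p fin v pe] unfolding t_def .
  have "PQ Q ?H' x = lam p Q H - Dv Q H v x" using PQ_split[OF fin v, of Q x] eq by simp
  also have "\<dots> \<ge> lam p Q H * (1 - ?k * t)" using lag by (simp add: algebra_simps)
  finally have PH': "PQ Q ?H' x \<ge> lam p Q H * (1 - ?k * t)" .
  have "lam p Q H * (1 - ?k * t) * (1 - t) powr (-(?k / p)) \<le> PQ Q ?H' x * (1 - t) powr (-(?k / p))"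
    using PH' by (intro mult_right_mono) auto
  also have "\<dots> = PQ Q ?H' (\<lambda>i. c * x i)" using PQ_scale[of Q ?H' c x] ck by simp
  also have "\<dots> \<le> lam p Q ?H'"
    by (rule lam_ge[OF _ _ pny]) (use p fin in auto)
  also have "\<dots> \<le> lamPn p Q P (n - 1)"
    by (rule lamPn_ge[OF _ H'P cH']) (use p n2 in auto)
  finally show "lam p Q H * (1 - real ?k * x v powr p) * (1 - x v powr p) powr (-(real ?k / p))
          \<le> lamPn p Q P (n - 1)" unfolding t_def .
qed




lemma key_point:
  fixes p m t :: real and s :: nat
  assumes p: "p > 1" and s: "s \<ge> 1" and m: "m \<ge> 2 * real s + 3"
    and E2: "(m - 1) * ln (m - 1) \<ge> 2/3 * m * ln m"
    and E3: "m / ln m \<ge> 8 * (real s)^2"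
    and t0: "0 \<le> t" and tb: "t < (1/m)*(1 - p/((p-1)*real s*ln m))"
  shows "((m - 1)/m) powr (real s - real s/p) * sqrt (ln m/ln (m - 1))
      \<le> (1 - real s * t) * (1 - t) powr (-(real s/p))"
proof -
  define e where "e = real s - real s / p"
  define L where "L = ln m"
  define L1 where "L1 = ln (m - 1)"
  have m5: "m \<ge> 5" using m s by simp
  have mpos: "m > 0" using m5 by simp
  have Lpos: "L > 0" unfolding L_def using m5 by simp
  have L1pos: "L1 > 0" unfolding L1_def using m5 by simp
  have epos: "e > 0" unfolding e_def using p s by (simp add: field_simps)
  have ec: "e * (p/((p-1)*real s*L)) = 1 / L"
    unfolding e_def using p s Lpos by (simp add: field_simps)
  have q0: "p/((p-1)*real s*L) \<ge> 0" using p s Lpos by simp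
  have tb': "t < 1/m - (1/m) * (p/((p-1)*real s*L))" using tb unfolding L_def by (simp add: algebra_simps)
  have "(1/m) * (p/((p-1)*real s*L)) \<ge> 0" using q0 mpos by (intro mult_nonneg_nonneg) auto
  then have tm: "t \<le> 1/m" using tb' by linarith
  have st: "real s * t \<le> 1/2"
  proof -
    have "real s * t \<le> real s * (1/m)" using tm by (intro mult_left_mono) auto
    also have "\<dots> \<le> 1/2"
    proof -
      have "real s \<le> 1/2 * m" using m by linarith
      then show ?thesis using mpos by (simp add: pos_divide_le_eq)
    qed
    finally show ?thesis .
  qed
  have "1/m < 1" using m5 by simp
  then have t1: "t < 1" using tm by linarith
  have pos1: "1 - real s * t > 0" using st by simp
  have pos2: "(1 - t) powr (-(real s/p)) > 0" using t1 by simp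
  have lnF: "ln ((1 - real s * t) * (1 - t) powr (-(real s/p))) = ln (1 - real s * t) - (real s / p) * ln (1 - t)"
    using pos1 t1 by (simp add: ln_mult ln_powr)
  have a1: "ln (1 - real s * t) \<ge> - (real s * t) - 2 * (real s * t)^2"
    by (rule ln_one_minus_pos_lower_bound) (use st t0 in auto)
  have a2: "ln (1 - t) \<le> - t" using ln_le_minus_one[of "1 - t"] t1 by simp
  have sp: "real s / p \<ge> 0" using p by simp
  have a3: "- (real s / p) * ln (1 - t) \<ge> (real s / p) * t" using mult_left_mono[OF a2 sp] by simp
  have tsq: "t^2 \<le> 1 / m^2"
  proof -
    have "t^2 \<le> (1/m)^2" using tm t0 by (intro power_mono) auto
    then show ?thesis by (simp add: power_divide)
  qed
  have a4: "2 * (real s * t)^2 \<le> 2 * (real s)^2 / m^2"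
    using mult_left_mono[OF tsq, of "2 * (real s)^2"] by (simp add: power_mult_distrib)
  have a5: "e * t \<le> e / m - 1 / (m * L)"
  proof -
    have "e * t \<le> e * (1/m - (1/m) * (p/((p-1)*real s*L)))" using tb' epos by (intro mult_left_mono) auto
    also have "\<dots> = e/m - (1/m) * (e * (p/((p-1)*real s*L)))" by (simp add: algebra_simps)
    also have "\<dots> = e / m - 1 / (m * L)" unfolding ec by simp
    finally show ?thesis .
  qed
  have lowF: "ln ((1 - real s * t) * (1 - t) powr (-(real s/p))) \<ge> - e/m + 1/(m*L) - 2 * (real s)^2 / m^2"
  proof -
    have "e * t = real s * t - (real s / p) * t" unfolding e_def by (simp add: algebra_simps)
    then show ?thesis unfolding lnF using a1 a3 a4 a5 by linarith
  qed
  define R where "R = ((m - 1)/m) powr e * sqrt (L / L1)"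
  have ratio_pos: "L / L1 > 0" using Lpos L1pos by simp
  have Rpos: "R > 0" unfolding R_def using m5 ratio_pos Lpos L1pos by simp
  have lnR: "ln R = e * ln ((m-1)/m) + ln (L / L1) / 2"
    unfolding R_def using m5 ratio_pos Lpos L1pos by (simp add: ln_mult ln_powr ln_sqrt)
  have b1: "ln ((m-1)/m) \<le> - 1/m"
    using ln_le_minus_one[of "(m-1)/m"] m5 by (simp add: field_simps)
  have b1': "e * ln ((m-1)/m) \<le> - e/m" using mult_left_mono[OF b1, of e] epos by simp
  have b2: "ln (L / L1) \<le> (L - L1) / L1" using ln_le_minus_one[OF ratio_pos] L1pos by (simp add: field_simps)
  have b3: "L - L1 \<le> 1 / (m - 1)" unfolding L_def L1_def
    using ln_diff_le[of m "m - 1"] m5 by simp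
  have b4: "(L - L1) / L1 \<le> 1 / ((m - 1) * L1)"
    using divide_right_mono[OF b3, of L1] L1pos by simp
  have b5: "1 / ((m - 1) * L1) \<le> 3 / (2 * m * L)"
  proof -
    have "(m - 1) * L1 \<ge> 2/3 * m * L" using E2 unfolding L_def L1_def by simp
    moreover have "2/3 * m * L > 0" using mpos Lpos by simp
    moreover have "(m - 1) * L1 > 0" using m5 L1pos by simp
    ultimately have "1 / ((m - 1) * L1) \<le> 1 / (2/3 * m * L)"
      by (intro divide_left_mono) (auto intro: mult_pos_pos)
    also have "1 / (2/3 * m * L) = 3 / (2 * m * L)" by (simp add: field_simps)
    finally show ?thesis .
  qed
  have upR: "ln R \<le> - e/m + 3 / (4 * m * L)"
    using lnR b1' b2 b4 b5 by (simp add: field_simps)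
  have c1: "8 * (real s)^2 * L \<le> m" using E3 Lpos unfolding L_def by (simp add: field_simps)
  have c2: "2 * (real s)^2 / m^2 \<le> 1 / (4 * m * L)"
    using c1 mpos Lpos by (simp add: field_simps power2_eq_square)
  have "3 / (4 * m * L) = 1/(m*L) - 1 / (4 * m * L)" using mpos Lpos by (simp add: field_simps)
  then have "ln R \<le> ln ((1 - real s * t) * (1 - t) powr (-(real s/p)))"
    using upR lowF c2 by argo
  then have "R \<le> (1 - real s * t) * (1 - t) powr (-(real s/p))"
    using Rpos pos1 pos2 by simp
  then show ?thesis unfolding R_def e_def L_def L1_def .
qed


theorem lemma3p5:
  fixes p :: real and r s :: nat and Q :: hgraph and \<P> :: "hgraph set"
    and H :: "nat \<Rightarrow> hgraph" and x :: "nat \<Rightarrow> nat \<Rightarrow> real"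
  assumes "p > 1" and "2 \<le> r" and "r \<le> s"
    and "rgraph r Q" and "card (verts Q) = s"
    and "hereditary r \<P>"
    and "lamP p Q \<P> > 0"
    and "\<And>n. n \<ge> s \<Longrightarrow> H n \<in> \<P> \<and> card (verts (H n)) = n \<and> lam p Q (H n) = lamPn p Q \<P> n"
    and "\<And>n. n \<ge> s \<Longrightarrow> principal_eigvec p Q (H n) (x n)"
  shows "infinite {n. n \<ge> s \<and>
           xmin (verts (H n)) (x n) powr p \<ge> (1 / real n) * (1 - p / ((p - 1) * real s * ln (real n)))}"
proof
  let ?S = "{n. n \<ge> s \<and>
           xmin (verts (H n)) (x n) powr p \<ge> (1 / real n) * (1 - p / ((p - 1) * real s * ln (real n)))}"
  assume finS: "finite ?S"
  note p = assms(1) and her = assms(6) and Hn = assms(8) and pe = assms(9)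
  have s2: "s \<ge> 2" using assms(2,3) by simp
  obtain N0 where N0: "\<forall>n\<in>?S. n \<le> N0" using finS finite_nat_set_iff_bounded_le by blast
  define E where "E = real s / p - real s"
  define a where "a n = lamPn p Q \<P> n * real n powr E" for n
  define q where "q n = a n * sqrt (ln (real n))" for n
  have lamP_eq: "lamP p Q \<P> = lim a" unfolding lamP_def a_def E_def assms(5) ..
  have ev1: "eventually (\<lambda>n::nat. real n \<ge> 2 * real s + 3) sequentially"
    using eventually_ge_at_top[of "2 * s + 3"] by eventually_elim simp
  have ev2: "eventually (\<lambda>n::nat. (real n - 1) * ln (real n - 1) \<ge> 2/3 * real n * ln (real n)) sequentially"
    by real_asymp
  have "filterlim (\<lambda>n::nat. real n / ln (real n)) at_top sequentially" by real_asymp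
  then have ev3: "eventually (\<lambda>n::nat. real n / ln (real n) \<ge> 8 * (real s)^2) sequentially"
    unfolding filterlim_at_top by blast
  obtain N1 where N1: "\<And>n. n \<ge> N1 \<Longrightarrow> real n \<ge> 2 * real s + 3 \<and>
      (real n - 1) * ln (real n - 1) \<ge> 2/3 * real n * ln (real n) \<and> real n / ln (real n) \<ge> 8 * (real s)^2"
    using eventually_conj[OF ev1 eventually_conj[OF ev2 ev3]] unfolding eventually_sequentially by blast
  define M where "M = max (max N0 N1) (s + 3)"
  have lam_nn: "lamPn p Q \<P> n \<ge> 0" if "n \<ge> s" for n
  proof -
    have "lamPn p Q \<P> n = PQ Q (H n) (x n)" using Hn[OF that] pe[OF that] unfolding principal_eigvec_def by simp
    also have "\<dots> \<ge> 0" using pe[OF that] unfolding principal_eigvec_def by (intro PQ_nonneg) auto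
    finally show ?thesis .
  qed
  have stepq: "q (Suc n) \<le> q n" if nM: "n \<ge> M" for n
  proof -
    define n' where "n' = Suc n"
    have n's: "n' \<ge> s" and n'N0: "n' > N0" and n'N1: "n' \<ge> N1" and n'3: "n' \<ge> s + 3"
      using nM unfolding M_def n'_def by auto
    have n'S: "n' \<notin> ?S" using N0 n'N0 by auto
    define V where "V = verts (H n')"
    have HP: "H n' \<in> \<P>" and cV: "card V = n'" and lameq: "lam p Q (H n') = lamPn p Q \<P> n'"
      using Hn[OF n's] unfolding V_def by auto
    have finV: "finite V" and neV: "V \<noteq> {}" using cV n'3 card_ge_0_finite by force+
    define xm where "xm = xmin V (x n')"
    have "xm \<in> x n' ` V" unfolding xm_def xmin_def using finV neV by simp
    then obtain v where v: "v \<in> V" and xv: "x n' v = xm" by auto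
    have vmin: "\<forall>i\<in>V. x n' v \<le> x n' i" using xv finV unfolding xm_def xmin_def by auto
    define t where "t = x n' v powr p"
    have t0: "0 \<le> t" unfolding t_def by simp
    have tb: "t < (1 / real n') * (1 - p / ((p - 1) * real s * ln (real n')))"
      using n'S n's xv unfolding t_def xm_def V_def by auto
    have rem: "lam p Q (H n') * (1 - real s * t) * (1 - t) powr (-(real s / p)) \<le> lamPn p Q \<P> (n' - 1)"
      using removal(2)[OF p her HP cV[unfolded V_def] _ pe[OF n's] v[unfolded V_def] vmin[unfolded V_def]]
        n'3 assms(5) unfolding t_def by simp
    have N1': "real n' \<ge> 2 * real s + 3 \<and>
      (real n' - 1) * ln (real n' - 1) \<ge> 2/3 * real n' * ln (real n') \<and> real n' / ln (real n') \<ge> 8 * (real s)^2"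
      using N1[OF n'N1] .
    define R where "R = ((real n' - 1)/real n') powr (real s - real s/p) * sqrt (ln (real n')/ln (real n' - 1))"
    have RF: "R \<le> (1 - real s * t) * (1 - t) powr (-(real s/p))"
      unfolding R_def using key_point[OF p _ _ _ _ t0 tb] s2 N1' by auto
    define lam where "lam = lamPn p Q \<P> n'"
    have lam0: "lam \<ge> 0" unfolding lam_def using lam_nn[OF n's] .
    have "lam * R \<le> lam * ((1 - real s * t) * (1 - t) powr (-(real s/p)))"
      using RF lam0 by (intro mult_left_mono)
    also have "\<dots> \<le> lamPn p Q \<P> n" using rem lameq unfolding lam_def n'_def by (simp add: mult.assoc)
    finally have main: "lam * R \<le> lamPn p Q \<P> n" .
    define m where "m = real n'"
    have m5: "m \<ge> 5" unfolding m_def using n'3 s2 by simp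
    have mn: "real n = m - 1" unfolding m_def n'_def by simp
    have L1pos: "ln (m - 1) > 0" using m5 by simp
    have "ln (real n) \<ge> 0" using mn m5 by simp
    then have w0: "real n powr E * sqrt (ln (real n)) \<ge> 0" by simp
    have iden: "R * (real n powr E * sqrt (ln (real n))) = m powr E * sqrt (ln m)"
    proof -
      have "((m - 1)/m) powr (real s - real s/p) = ((m - 1)/m) powr (-E)" unfolding E_def by simp
      also have "\<dots> = inverse (((m - 1)/m) powr E)" by (rule powr_minus)
      also have "((m - 1)/m) powr E = (m - 1) powr E / m powr E" using m5 by (simp add: powr_divide)
      also have "inverse ((m - 1) powr E / m powr E) = m powr E / (m - 1) powr E" by simp
      finally have A1: "((m - 1)/m) powr (real s - real s/p) = m powr E / (m - 1) powr E" .
      have A2: "sqrt (ln m / ln (m - 1)) * sqrt (ln (m - 1)) = sqrt (ln m)"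
        using L1pos by (simp add: real_sqrt_mult[symmetric])
      have "(m - 1) powr E > 0" using m5 by simp
      then show ?thesis unfolding R_def mn m_def[symmetric] A1
        using A2 by (simp add: field_simps)
    qed
    have "q n' = lam * (m powr E * sqrt (ln m))" unfolding q_def a_def lam_def m_def by simp
    also have "\<dots> = (lam * R) * (real n powr E * sqrt (ln (real n)))" using iden by (simp add: algebra_simps)
    also have "\<dots> \<le> lamPn p Q \<P> n * (real n powr E * sqrt (ln (real n)))"
      using main w0 by (intro mult_right_mono)
    also have "\<dots> = q n" unfolding q_def a_def by (simp add: algebra_simps)
    finally show ?thesis unfolding n'_def .
  qed
  have qM: "q n \<le> q M" if "n \<ge> M" for n
    using that
  proof (induction n rule: dec_induct)
    case base then show ?case by simp
  next
    case (step n) then show ?case using stepq[of n] by simp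
  qed
  have Ms: "M \<ge> s + 3" unfolding M_def by simp
  have a_nn: "a n \<ge> 0" if "n \<ge> s" for n unfolding a_def using lam_nn[OF that] by simp
  have a_le: "a n \<le> q M * (1 / sqrt (ln (real n)))" if "n \<ge> M" for n
  proof -
    have "real n \<ge> 5" using that Ms s2 by simp
    then have sq: "sqrt (ln (real n)) > 0" by simp
    have "a n = q n / sqrt (ln (real n))" unfolding q_def using sq by simp
    also have "\<dots> \<le> q M / sqrt (ln (real n))" using qM[OF that] sq by (simp add: divide_right_mono)
    finally show ?thesis by simp
  qed
  have lim0: "((\<lambda>n::nat. 1 / sqrt (ln (real n))) \<longlongrightarrow> 0) sequentially" by real_asymp
  have "((\<lambda>n. q M * (1 / sqrt (ln (real n)))) \<longlongrightarrow> q M * 0) sequentially"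
    by (intro tendsto_mult tendsto_const lim0)
  then have up: "((\<lambda>n. q M * (1 / sqrt (ln (real n)))) \<longlongrightarrow> 0) sequentially" by simp
  have "a \<longlonglongrightarrow> 0"
  proof (rule tendsto_sandwich[OF _ _ tendsto_const up])
    show "eventually (\<lambda>n. 0 \<le> a n) sequentially"
      using a_nn unfolding eventually_sequentially by blast
    show "eventually (\<lambda>n. a n \<le> q M * (1 / sqrt (ln (real n)))) sequentially"
      using a_le unfolding eventually_sequentially by blast
  qed
  then have "lim a = 0" by (rule limI)
  then show False using assms(7) lamP_eq by simp
qed

end
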